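(* Let $B=F(b_1,\ldots,b_n)$ be a Ferrers board with $0\le b_1\le\cdots\le b_n$. Then, as polynomials in $x$, $$x^n=\sum_{k=0}^n\mathbf{rPT}_{n-k}(B,p,q,r)\,(x-P_{b_1}(p,q,r))(x-P_{b_2}(p,q,r))\cdots(x-P_{b_k}(p,q,r)),$$ where the empty product ($k=0$) equals 1.
   Context: For $m\ge1$, a $P$-tiling of height $m$ is a tiling of a column of height $m$ by tiles of heights 1, 2 and 3 whose bottom-most tile has height 1. $P_m(p,q,r)=\sum_T q^{\mathrm{one}(T)}p^{\mathrm{two}(T)}r^{\mathrm{three}(T)}$ over all $P$-tilings $T$ of height $m$, where $\mathrm{one},\mathrm{two},\mathrm{three}$ count tiles of height 1, 2, 3. There are no $P$-tilings of height 0 and $P_0(p,q,r)=0$. A Ferrers board $F(b_1,\ldots,b_n)$ has column heights $b_1,\ldots,b_n$ from left to right. A $P$-rook placement of $k$ tilings in $B=F(b_1,\ldots,b_n)$ is a choice of columns $1\le i_1<\cdots<i_k\le n$ with, for each $s=1,\ldots,k$, a $P$-tiling of height $b_{i_s-(s-1)}$ in column $i_s$ (the number of cells of column $i_s$ left uncanceled by earlier tilings, each tiling canceling top cells of columns to its right so that after $s$ tilings the untiled columns have $b_1,\ldots,b_{n-s}$ uncanceled cells). Its weight is $q^ap^br^c$ with $a,b,c$ the total numbers of tiles of height 1, 2, 3 used. $\mathbf{rPT}_k(B,p,q,r)$ is the sum of the weights of all $P$-rook placements of $k$ tilings in $B$ (the empty placement has weight 1). *)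

theory Defs
  imports "HOL-Computational_Algebra.Polynomial"
begin

text \<open>A P-tiling of height m: list of tile heights listed bottom to top,
  each in {1,2,3}, bottom-most tile of height 1, heights summing to m.\<close>
definition Ptilings :: "nat \<Rightarrow> nat list set" where
  "Ptilings m = {ts. ts \<noteq> [] \<and> hd ts = 1 \<and> set ts \<subseteq> {1,2,3} \<and> sum_list ts = m}"

definition tweight :: "'a::comm_ring_1 \<Rightarrow> 'a \<Rightarrow> 'a \<Rightarrow> nat list \<Rightarrow> 'a" where
  "tweight p q r ts = q ^ count_list ts 1 * p ^ count_list ts 2 * r ^ count_list ts 3"

definition Ppoly :: "nat \<Rightarrow> 'a::comm_ring_1 \<Rightarrow> 'a \<Rightarrow> 'a \<Rightarrow> 'a" where
  "Ppoly m p q r = (\<Sum>ts\<in>Ptilings m. tweight p q r ts)"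

text \<open>Board F(b_1,...,b_n) given as list bs with b_j = bs ! (j-1).
  A P-rook placement of k tilings: list of pairs (column i_s, tiling T_s), s = 0..k-1
  (0-based), columns strictly increasing in {1..n}, T_s a P-tiling of height
  b_{i_s - s} (i.e. the paper's b_{i_s-(s-1)} with 1-based s).\<close>
definition PT_placements :: "nat list \<Rightarrow> nat \<Rightarrow> (nat \<times> nat list) list set" where
  "PT_placements bs k = {pl. length pl = k \<and> sorted_wrt (<) (map fst pl) \<and>
     (\<forall>s<k. fst (pl ! s) \<in> {1..length bs} \<and>
            snd (pl ! s) \<in> Ptilings (bs ! (fst (pl ! s) - s - 1)))}"

definition rPT :: "nat \<Rightarrow> nat list \<Rightarrow> 'a::comm_ring_1 \<Rightarrow> 'a \<Rightarrow> 'a \<Rightarrow> 'a" where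
  "rPT k bs p q r = (\<Sum>pl\<in>PT_placements bs k. \<Prod>s<k. tweight p q r (snd (pl ! s)))"

end

theory Submission
  imports Defs
begin

definition PTn :: "nat list \<Rightarrow> nat \<Rightarrow> nat \<Rightarrow> (nat \<times> nat list) list set" where
  "PTn bs n k = {pl. length pl = k \<and> sorted_wrt (<) (map fst pl) \<and>
     (\<forall>s<k. fst (pl ! s) \<in> {1..n} \<and>
            snd (pl ! s) \<in> Ptilings (bs ! (fst (pl ! s) - s - 1)))}"

lemma PTn_0: "PTn bs n 0 = {[]}"
  by (auto simp: PTn_def)

lemma PTn_snoc:
  "ys @ [(c,t)] \<in> PTn bs n (Suc k) \<longleftrightarrow>
     ys \<in> PTn bs (c-1) k \<and> 1 \<le> c \<and> c \<le> n \<and> t \<in> Ptilings (bs ! (c - k - 1))"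
proof -
  have A: "(\<forall>s<Suc k. P s) \<longleftrightarrow> (\<forall>s<k. P s) \<and> P k" for P
    using less_Suc_eq by auto
  have B: "(\<forall>x\<in>set ys. fst x < c) \<longleftrightarrow> (\<forall>s<length ys. fst (ys!s) < c)"
    by (metis in_set_conv_nth)
  show ?thesis
    unfolding PTn_def mem_Collect_eq A
    by (auto simp: nth_append sorted_wrt_append B)
qed

lemma PTn_zero_Suc: "PTn bs 0 (Suc k) = {}"
  by (auto simp: PTn_def)

lemma PTn_Suc:
  "PTn bs (Suc n) (Suc k) = PTn bs n (Suc k) \<union>
     (\<lambda>(pl,t). pl @ [(Suc n, t)]) ` (PTn bs n k \<times> Ptilings (bs ! (n - k)))"
proof (intro equalityI subsetI)
  fix pl assume pl: "pl \<in> PTn bs (Suc n) (Suc k)"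
  hence "pl \<noteq> []" by (auto simp: PTn_def)
  then obtain ys c t where e: "pl = ys @ [(c,t)]"
    by (metis rev_exhaust surj_pair)
  from pl[unfolded e PTn_snoc] have h: "ys \<in> PTn bs (c-1) k" "1 \<le> c" "c \<le> Suc n"
    "t \<in> Ptilings (bs ! (c - k - 1))" by auto
  show "pl \<in> PTn bs n (Suc k) \<union>
     (\<lambda>(pl,t). pl @ [(Suc n, t)]) ` (PTn bs n k \<times> Ptilings (bs ! (n - k)))"
  proof (cases "c = Suc n")
    case True
    then show ?thesis using h e by (auto intro!: image_eqI[where x="(ys,t)"])
  next
    case False
    then have "pl \<in> PTn bs n (Suc k)" unfolding e PTn_snoc using h by auto
    then show ?thesis by blast
  qed
next
  fix pl assume "pl \<in> PTn bs n (Suc k) \<union>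
     (\<lambda>(pl,t). pl @ [(Suc n, t)]) ` (PTn bs n k \<times> Ptilings (bs ! (n - k)))"
  then show "pl \<in> PTn bs (Suc n) (Suc k)"
  proof
    assume a: "pl \<in> PTn bs n (Suc k)"
    hence "pl \<noteq> []" by (auto simp: PTn_def)
    then obtain ys c t where e: "pl = ys @ [(c,t)]"
      by (metis rev_exhaust surj_pair)
    from a show ?thesis unfolding e PTn_snoc by auto
  next
    assume "pl \<in> (\<lambda>(pl,t). pl @ [(Suc n, t)]) ` (PTn bs n k \<times> Ptilings (bs ! (n - k)))"
    then obtain ys t where "pl = ys @ [(Suc n, t)]" "ys \<in> PTn bs n k" "t \<in> Ptilings (bs ! (n - k))"
      by auto
    then show ?thesis by (simp add: PTn_snoc)
  qed
qed

lemma PTn_disj: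
  "PTn bs n (Suc k) \<inter> (\<lambda>(pl,t). pl @ [(Suc n, t)]) ` (PTn bs n k \<times> Ptilings (bs ! (n - k))) = {}"
  by (auto simp: PTn_snoc)

lemma finite_Ptilings: "finite (Ptilings m)"
proof -
  have "Ptilings m \<subseteq> {xs. set xs \<subseteq> {1,2,3} \<and> length xs \<le> m}"
  proof
    fix ts assume "ts \<in> Ptilings m"
    hence t: "set ts \<subseteq> {1,2,3}" "sum_list ts = m" by (auto simp: Ptilings_def)
    have "length ts \<le> sum_list ts" using t(1)
      by (induction ts) auto
    thus "ts \<in> {xs. set xs \<subseteq> {1,2,3} \<and> length xs \<le> m}" using t by auto
  qed
  thus ?thesis using finite_lists_length_le[of "{1::nat,2,3}" m] finite_subset by blast
qed

lemma finite_PTn: "finite (PTn bs n k)"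
proof (induction n arbitrary: k)
  case 0 thus ?case by (cases k) (auto simp: PTn_0 PTn_zero_Suc)
next
  case (Suc n) thus ?case by (cases k) (auto simp: PTn_0 PTn_Suc finite_Ptilings)
qed

lemma PTn_big: "n < k \<Longrightarrow> PTn bs n k = {}"
proof (induction n arbitrary: k)
  case 0 thus ?case by (cases k) (auto simp: PTn_zero_Suc)
next
  case (Suc n) thus ?case by (cases k) (auto simp: PTn_Suc)
qed

definition Rn :: "nat list \<Rightarrow> nat \<Rightarrow> nat \<Rightarrow> 'a \<Rightarrow> 'a \<Rightarrow> 'a \<Rightarrow> 'a::comm_ring_1" where
  "Rn bs n k p q r = (\<Sum>pl\<in>PTn bs n k. \<Prod>s<k. tweight p q r (snd (pl ! s)))"

lemma Rn_0: "Rn bs n 0 p q r = 1"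
  by (simp add: Rn_def PTn_0)

lemma Rn_big: "n < k \<Longrightarrow> Rn bs n k p q r = 0"
  by (simp add: Rn_def PTn_big)

lemma Rn_Suc: "Rn bs (Suc n) (Suc k) p q r = Rn bs n (Suc k) p q r + Ppoly (bs ! (n - k)) p q r * Rn bs n k p q r"
proof -
  let ?f = "\<lambda>pl. \<Prod>s<Suc k. tweight p q r (snd (pl ! s))"
  let ?g = "\<lambda>(pl,t). pl @ [(Suc n, t)]"
  let ?A = "PTn bs n k \<times> Ptilings (bs ! (n - k))"
  have inj: "inj_on ?g ?A" by (auto simp: inj_on_def)
  have "Rn bs (Suc n) (Suc k) p q r = sum ?f (PTn bs n (Suc k)) + sum ?f (?g ` ?A)"
    unfolding Rn_def PTn_Suc
    by (rule sum.union_disjoint) (auto simp: finite_PTn finite_Ptilings PTn_disj[simplified])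
  also have "sum ?f (?g ` ?A) = sum (?f \<circ> ?g) ?A"
    by (rule sum.reindex[OF inj])
  also have "\<dots> = (\<Sum>(ys,t)\<in>?A. (\<Prod>s<k. tweight p q r (snd (ys ! s))) * tweight p q r t)"
  proof (rule sum.cong[OF refl])
    fix x assume "x \<in> ?A"
    then obtain ys t where x: "x = (ys,t)" "length ys = k" by (auto simp: PTn_def)
    have "(\<Prod>s<k. tweight p q r (snd ((ys @ [(Suc n, t)]) ! s))) = (\<Prod>s<k. tweight p q r (snd (ys ! s)))"
      by (rule prod.cong) (auto simp: nth_append x)
    then show "(?f \<circ> ?g) x = (case x of (ys,t) \<Rightarrow> (\<Prod>s<k. tweight p q r (snd (ys ! s))) * tweight p q r t)"
      using x by (simp add: nth_append)
  qed
  also have "\<dots> = Rn bs n k p q r * Ppoly (bs ! (n - k)) p q r"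
    unfolding Rn_def Ppoly_def sum_product sum.cartesian_product
    by (simp add: case_prod_beta)
  finally show ?thesis unfolding Rn_def by (simp add: mult.commute)
qed


definition Qp :: "nat list \<Rightarrow> nat \<Rightarrow> 'a \<Rightarrow> 'a \<Rightarrow> 'a \<Rightarrow> 'a::comm_ring_1 poly" where
  "Qp bs k p q r = (\<Prod>j=1..k. [:- Ppoly (bs ! (j - 1)) p q r, 1:])"

lemma Qp_0: "Qp bs 0 p q r = 1" by (simp add: Qp_def)

lemma Qp_Suc: "Qp bs (Suc k) p q r = Qp bs k p q r * [:- Ppoly (bs ! k) p q r, 1:]"
  by (simp add: Qp_def)

lemma xQp: "[:0,1:] * Qp bs k p q r = Qp bs (Suc k) p q r + smult (Ppoly (bs ! k) p q r) (Qp bs k p q r)"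
proof -
  have "[:0,1:] = [:- Ppoly (bs ! k) p q r, 1:] + [:Ppoly (bs ! k) p q r:]" by simp
  then show ?thesis unfolding Qp_Suc by (simp add: algebra_simps)
qed

lemma main:
  "(monom 1 n :: 'a::comm_ring_1 poly) = (\<Sum>k=0..n. smult (Rn bs n (n-k) p q r) (Qp bs k p q r))"
proof (induction n)
  case 0 thus ?case by (simp add: Rn_0 Qp_0)
next
  case (Suc n)
  let ?R = "\<lambda>m k. Rn bs m k p q r" and ?Q = "\<lambda>k. Qp bs k p q r" and ?P = "\<lambda>k. Ppoly (bs ! k) p q r"
  have "(monom 1 (Suc n) :: 'a poly) = [:0,1:] * monom 1 n"
    by (simp add: monom_Suc)
  also have "\<dots> = (\<Sum>k=0..n. smult (?R n (n-k)) ([:0,1:] * ?Q k))"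
    unfolding Suc sum_distrib_left by (simp add: mult_smult_right)
  also have "\<dots> = (\<Sum>k=0..n. smult (?R n (n-k)) (?Q (Suc k))) + (\<Sum>k=0..n. smult (?R n (n-k) * ?P k) (?Q k))"
    unfolding xQp smult_add_right sum.distrib by simp
  also have "(\<Sum>k=0..n. smult (?R n (n-k)) (?Q (Suc k))) = (\<Sum>k=0..Suc n. smult (?R n (Suc n - k)) (?Q k))"
    unfolding sum.atLeast0_atMost_Suc_shift by (simp add: Rn_big)
  also have "(\<Sum>k=0..n. smult (?R n (n-k) * ?P k) (?Q k)) = (\<Sum>k=0..Suc n. smult (if k \<le> n then ?R n (n-k) * ?P k else 0) (?Q k))"
    unfolding sum.atLeast0_atMost_Suc by simp
  also have "(\<Sum>k=0..Suc n. smult (?R n (Suc n - k)) (?Q k)) + (\<Sum>k=0..Suc n. smult (if k \<le> n then ?R n (n-k) * ?P k else 0) (?Q k))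
     = (\<Sum>k=0..Suc n. smult (?R (Suc n) (Suc n - k)) (?Q k))"
    unfolding sum.distrib[symmetric] smult_add_left[symmetric]
  proof (rule sum.cong[OF refl])
    fix k assume "k \<in> {0..Suc n}"
    then consider "k \<le> n" | "k = Suc n" by fastforce
    then show "smult (?R n (Suc n - k) + (if k \<le> n then ?R n (n-k) * ?P k else 0)) (?Q k) = smult (?R (Suc n) (Suc n - k)) (?Q k)"
    proof cases
      case 1
      then have "Suc n - k = Suc (n - k)" "n - (n - k) = k" by auto
      then show ?thesis using 1 by (simp add: Rn_Suc mult.commute)
    next
      case 2 thus ?thesis by (simp add: Rn_0)
    qed
  qed
  finally show ?case .
qed

theorem theorem8:
  fixes bs :: "nat list" and p q r :: "'a::comm_ring_1"
  assumes "sorted bs"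
  shows "(monom 1 (length bs) :: 'a poly) =
    (\<Sum>k=0..length bs. smult (rPT (length bs - k) bs p q r)
        (\<Prod>j=1..k. [:- Ppoly (bs ! (j - 1)) p q r, 1:]))"
proof -
  have "rPT k bs p q r = Rn bs (length bs) k p q r" for k
    by (simp add: rPT_def Rn_def PT_placements_def PTn_def)
  then show ?thesis using main[of "length bs" bs p q r] by (simp add: Qp_def)
qed

end
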